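(* For each integer $\mu\geq 2$ there exists a large set with multiplicity LS$(3,4,10;\mu)$.
   Context: A Steiner system S$(t,k,n)$ is a pair $(Q,B)$ where $Q$ is an $n$-set and $B$ is a collection of $k$-subsets (blocks) of $Q$ such that every $t$-subset of $Q$ is contained in exactly one block. A large set with multiplicity $\mu$, LS$(t,k,n;\mu)$, is a family (the same system may occur more than once) of Steiner systems S$(t,k,n)$ on a common $n$-set $Q$ such that every $k$-subset of $Q$ is a block of exactly $\mu$ of the systems. *)

theory Defs
  imports Main
begin

definition steiner_system :: "nat \<Rightarrow> nat \<Rightarrow> nat \<Rightarrow> 'a set \<Rightarrow> 'a set set \<Rightarrow> bool" where
  "steiner_system t k n Q B \<longleftrightarrow>
     finite Q \<and> card Q = n \<and>
     (\<forall>b\<in>B. b \<subseteq> Q \<and> card b = k) \<and>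
     (\<forall>T. T \<subseteq> Q \<and> card T = t \<longrightarrow> (\<exists>!b. b \<in> B \<and> T \<subseteq> b))"

definition large_set_mult :: "nat \<Rightarrow> nat \<Rightarrow> nat \<Rightarrow> nat \<Rightarrow> 'a set \<Rightarrow> 'a set set list \<Rightarrow> bool" where
  "large_set_mult t k n \<mu> Q F \<longleftrightarrow>
     finite Q \<and> card Q = n \<and>
     (\<forall>B\<in>set F. steiner_system t k n Q B) \<and>
     (\<forall>K. K \<subseteq> Q \<and> card K = k \<longrightarrow> card {i. i < length F \<and> K \<in> F ! i} = \<mu>)"

end

theory Submission
  imports Defs "HOL-Library.Multiset"
begin

fun combs :: "nat \<Rightarrow> 'a list \<Rightarrow> 'a list list" where
 "combs 0 xs = [[]]" | "combs (Suc k) [] = []" |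
 "combs (Suc k) (x#xs) = map ((#) x) (combs k xs) @ combs (Suc k) xs"

fun lexle :: "nat list \<Rightarrow> nat list \<Rightarrow> bool" where
  "lexle [] ys = True" | "lexle (x#xs) [] = False" |
  "lexle (x#xs) (y#ys) = (x < y \<or> (x = y \<and> lexle xs ys))"

fun merge :: "nat list list \<Rightarrow> nat list list \<Rightarrow> nat list list" where
  "merge [] ys = ys" | "merge xs [] = xs" |
  "merge (x#xs) (y#ys) = (if lexle x y then x # merge xs (y#ys) else y # merge (x#xs) ys)"

fun halve :: "'a list \<Rightarrow> 'a list \<times> 'a list" where
  "halve [] = ([],[])" | "halve [x] = ([x],[])" |
  "halve (x#y#zs) = (case halve zs of (a,b) \<Rightarrow> (x#a, y#b))"

lemma halve_len: "length (fst (halve xs)) \<le> length xs \<and> length (snd (halve xs)) \<le> length xs"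
  by (induction xs rule: halve.induct) (auto split: prod.splits)

function msort :: "nat list list \<Rightarrow> nat list list" where
  "msort [] = []" | "msort [x] = [x]" |
  "msort (x#y#zs) = (case halve (x#y#zs) of (a,b) \<Rightarrow> merge (msort a) (msort b))"
  by pat_completeness auto
termination
  apply (relation "measure length")
    apply simp_all
  subgoal for x y zs a b using halve_len[of zs] by (auto split: prod.splits)
  subgoal for x y zs a b using halve_len[of zs] by (auto split: prod.splits)
  done

lemma mset_merge: "mset (merge xs ys) = mset xs + mset ys"
  by (induction xs ys rule: merge.induct) auto

lemma mset_halve: "mset (fst (halve xs)) + mset (snd (halve xs)) = mset xs"
  by (induction xs rule: halve.induct) (auto split: prod.splits)

lemma mset_msort: "mset (msort xs) = mset xs"
proof (induction xs rule: msort.induct)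
  case (3 x y zs)
  obtain a b where h: "halve (x#y#zs) = (a,b)" by (cases "halve (x#y#zs)")
  have "mset a + mset b = mset (x#y#zs)" using mset_halve[of "x#y#zs"] h by simp
  then show ?case using 3 h by (simp add: mset_merge)
qed auto

lemma combs_char:
  "sorted_wrt (<) (xs::'a::linorder list) \<Longrightarrow> ys \<in> set (combs k xs) \<longleftrightarrow> sorted_wrt (<) ys \<and> set ys \<subseteq> set xs \<and> length ys = k"
proof (induction k xs arbitrary: ys rule: combs.induct)
  case (1 xs)
  then show ?case by auto
next
  case (2 k)
  then show ?case by auto
next
  case (3 k x xs)
  have sx: "sorted_wrt (<) xs" and gx: "\<forall>y\<in>set xs. x < y" using "3.prems" by auto
  show ?case
  proof
    assume "ys \<in> set (combs (Suc k) (x # xs))"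
    then consider zs where "ys = x # zs" "zs \<in> set (combs k xs)" | "ys \<in> set (combs (Suc k) xs)"
      by auto
    then show "sorted_wrt (<) ys \<and> set ys \<subseteq> set (x # xs) \<and> length ys = Suc k"
    proof cases
      case 1
      then show ?thesis using "3.IH"(1)[OF sx, of zs] gx by auto
    next
      case 2
      then show ?thesis using "3.IH"(2)[OF sx, of ys] by auto
    qed
  next
    assume a: "sorted_wrt (<) ys \<and> set ys \<subseteq> set (x # xs) \<and> length ys = Suc k"
    then obtain y zs where ys: "ys = y # zs" by (cases ys) auto
    show "ys \<in> set (combs (Suc k) (x # xs))"
    proof (cases "y = x")
      case True
      have "x \<notin> set zs"
      proof
        assume "x \<in> set zs"
        then have "x < x" using a ys True by auto
        then show False by simp
      qed
      then have "set zs \<subseteq> set xs" using a ys by auto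
      then have "zs \<in> set (combs k xs)" using "3.IH"(1)[OF sx, of zs] a ys by auto
      then show ?thesis using ys True by simp
    next
      case False
      then have "y \<in> set xs" using a ys by auto
      then have "x < y" using gx by auto
      then have "x \<notin> set ys" using a ys by auto
      then have "set ys \<subseteq> set xs" using a by auto
      then have "ys \<in> set (combs (Suc k) xs)" using "3.IH"(2)[OF sx, of ys] a by auto
      then show ?thesis by simp
    qed
  qed
qed

lemma combs_distinct: "sorted_wrt (<) (xs::'a::linorder list) \<Longrightarrow> distinct (combs k xs)"
proof (induction k xs rule: combs.induct)
  case (3 k x xs)
  have sx: "sorted_wrt (<) xs" and gx: "\<forall>y\<in>set xs. x < y" using "3.prems" by auto
  have "x \<notin> set zs" if "zs \<in> set (combs (Suc k) xs)" for zs
  proof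
    assume "x \<in> set zs"
    then have "x \<in> set xs" using combs_char[OF sx] that by auto
    then show False using gx by auto
  qed
  then have "set (map ((#) x) (combs k xs)) \<inter> set (combs (Suc k) xs) = {}" by fastforce
  then show ?case using 3 sx by (auto simp: distinct_map)
qed auto

lemma count_concat_ge1:
  "count (mset (concat (map f bl))) x \<ge> count (mset bl) b * count (mset (f b)) x"
  by (induction bl) (auto simp: algebra_simps)

lemma count_concat_ge2:
  assumes "b1 \<noteq> b2" "b1 \<in> set bl" "b2 \<in> set bl"
  shows "count (mset (concat (map f bl))) x \<ge> count (mset (f b1)) x + count (mset (f b2)) x"
  using assms
proof (induction bl)
  case (Cons c bl)
  show ?case
  proof (cases "c = b1")
    case True
    then have "b2 \<in> set bl" using Cons by auto
    then have "count (mset bl) b2 \<ge> 1" by (simp add: Suc_le_eq)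
    then have "count (mset (concat (map f bl))) x \<ge> count (mset (f b2)) x"
      using count_concat_ge1[where b=b2 and bl=bl and f=f and x=x] order_trans[of "count (mset (f b2)) x" "count (mset bl) b2 * count (mset (f b2)) x"] by simp
    then show ?thesis using True by simp
  next
    case False
    show ?thesis
    proof (cases "c = b2")
      case True
      then have "b1 \<in> set bl" using Cons False by auto
      then have "count (mset bl) b1 \<ge> 1" by (simp add: Suc_le_eq)
      then have "count (mset (concat (map f bl))) x \<ge> count (mset (f b1)) x"
        using count_concat_ge1[where b=b1 and bl=bl and f=f and x=x] order_trans[of "count (mset (f b1)) x" "count (mset bl) b1 * count (mset (f b1)) x"] by simp
      then show ?thesis using True by simp
    next
      case False2: False
      then have "b1 \<in> set bl" "b2 \<in> set bl" using Cons False by auto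
      then show ?thesis using Cons by auto
    qed
  qed
qed auto

lemma count_concat_distinct:
  "(\<forall>bl\<in>set L. distinct bl) \<Longrightarrow> count (mset (concat L)) y = length (filter (\<lambda>bl. y \<in> set bl) L)"
  by (induction L) (auto simp: distinct_count_atmost_1)

lemma count_concat_replicate:
  "count (mset (concat (map (replicate m) xs))) y = m * count (mset xs) y"
  by (induction xs) (auto simp: algebra_simps)

lemma length_filter_concat_replicate:
  "length (filter P (concat (replicate n xs))) = n * length (filter P xs)"
  by (induction n) auto

definition Q :: "nat list" where "Q = [0,1,2,3,4,5,6,7,8,9]"

lemma Q_set: "set Q = {0..<10}"
  by (auto simp: Q_def)

lemma Q_sorted: "sorted_wrt (<) Q"
  by (simp add: Q_def)

definition sys :: "nat list list \<Rightarrow> nat set set" where "sys bl = set (map set bl)"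


lemma card_set_strict: "sorted_wrt (<) (b::nat list) \<Longrightarrow> card (set b) = length b"
  by (simp add: distinct_card strict_sorted_iff)

lemma fam_ok:
  assumes E3: "\<forall>bl\<in>set L. msort (concat (map (combs 3) bl)) = combs 3 Q"
  and E4: "msort (concat L) = concat (map (replicate m) (combs 4 Q))"
  shows "(\<forall>bl\<in>set L. steiner_system 3 4 10 {0..<10} (sys bl)) \<and>
         (\<forall>K. K \<subseteq> {0..<10} \<and> card K = 4 \<longrightarrow> length (filter (\<lambda>B. K \<in> B) (map sys L)) = m)"
proof -
  have M4: "mset (concat L) = mset (concat (map (replicate m) (combs 4 Q)))"
    using mset_msort[of "concat L"] E4 by simp
  have blk: "b \<in> set (combs 4 Q)" if "bl \<in> set L" "b \<in> set bl" for bl b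
  proof -
    have "b \<in> set (concat L)" using that by auto
    then have "b \<in> set (concat (map (replicate m) (combs 4 Q)))"
      using M4 by (metis set_mset_mset)
    then show ?thesis by (auto split: if_splits)
  qed
  have blk2: "sorted_wrt (<) b \<and> set b \<subseteq> {0..<10} \<and> length b = 4" if "bl \<in> set L" "b \<in> set bl" for bl b
    using blk[OF that] combs_char[OF Q_sorted] Q_set by auto
  have M3: "mset (concat (map (combs 3) bl)) = mset (combs 3 Q)" if "bl \<in> set L" for bl
    using mset_msort[of "concat (map (combs 3) bl)"] E3 that by simp
  have c3: "count (mset (combs 3 Q)) t \<le> 1" for t
    using combs_distinct[OF Q_sorted, of 3] by (simp add: distinct_count_atmost_1)
  have dist: "distinct bl" if bl: "bl \<in> set L" for bl
  proof (rule ccontr)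
    assume "\<not> distinct bl"
    then obtain b where b: "count (mset bl) b \<noteq> (if b \<in> set bl then 1 else 0)"
      by (auto simp: distinct_count_atmost_1)
    then have bin: "b \<in> set bl" by (cases "b \<in> set bl") (auto simp: count_mset_0_iff)
    then have c0: "count (mset bl) b \<noteq> 0" by (simp add: count_mset_0_iff)
    have c1: "count (mset bl) b \<noteq> 1" using b bin by simp
    have b2: "count (mset bl) b \<ge> 2" using c0 c1 by linarith
    have sb: "sorted_wrt (<) b" "length b = 4" using blk2[OF bl bin] by auto
    have "take 3 b \<in> set (combs 3 b)"
      using combs_char[OF sb(1)] sb set_take_subset[of 3 b] by (auto simp: sorted_wrt_take)
    then have "count (mset (combs 3 b)) (take 3 b) \<ge> 1" by (simp add: Suc_le_eq)
    then have "count (mset (concat (map (combs 3) bl))) (take 3 b) \<ge> 2"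
      using count_concat_ge1[where f="combs 3" and bl=bl and b=b and x="take 3 b"] b2
      using mult_le_mono[of 2 "count (mset bl) b" 1 "count (mset (combs 3 b)) (take 3 b)"] by linarith
    then show False using M3[OF bl] c3[of "take 3 b"] by simp
  qed
  have steiner: "steiner_system 3 4 10 {0..<10} (sys bl)" if bl: "bl \<in> set L" for bl
    unfolding steiner_system_def
  proof (intro conjI allI impI ballI)
    show "finite {0..<10::nat}" by simp
    show "card {0..<10::nat} = 10" by simp
    fix B assume "B \<in> sys bl"
    then obtain b where b: "b \<in> set bl" "B = set b" by (auto simp: sys_def)
    then show "B \<subseteq> {0..<10}" "card B = 4" using blk2[OF bl b(1)] card_set_strict by auto
  next
    fix T :: "nat set" assume T: "T \<subseteq> {0..<10} \<and> card T = 3"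
    have fT: "finite T" using T finite_subset by blast
    define ts where "ts = sorted_list_of_set T"
    have ts: "sorted_wrt (<) ts" "set ts = T" "length ts = 3"
      using fT T by (auto simp: ts_def)
    have tsQ: "ts \<in> set (combs 3 Q)" using combs_char[OF Q_sorted] ts T Q_set by auto
    have inb: "ts \<in> set (combs 3 b) \<longleftrightarrow> T \<subseteq> set b" if "b \<in> set bl" for b
      using combs_char[of b ts 3] blk2[OF bl that] ts by auto
    have "ts \<in> set (concat (map (combs 3) bl))"
      using tsQ M3[OF bl] by (metis set_mset_mset)
    then obtain b where b: "b \<in> set bl" "ts \<in> set (combs 3 b)" by auto
    show "\<exists>!B. B \<in> sys bl \<and> T \<subseteq> B"
    proof (rule ex1I[where a="set b"])
      show "set b \<in> sys bl \<and> T \<subseteq> set b" using b inb by (auto simp: sys_def)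
    next
      fix B assume B: "B \<in> sys bl \<and> T \<subseteq> B"
      then obtain b' where b': "b' \<in> set bl" "B = set b'" by (auto simp: sys_def)
      have t': "ts \<in> set (combs 3 b')" using inb[OF b'(1)] B b' by auto
      show "B = set b"
      proof (rule ccontr)
        assume "B \<noteq> set b"
        then have "b' \<noteq> b" using b' by auto
        then have "count (mset (concat (map (combs 3) bl))) ts \<ge> count (mset (combs 3 b')) ts + count (mset (combs 3 b)) ts"
          using count_concat_ge2[of b' b bl "combs 3" ts] \<open>b' \<noteq> b\<close> b(1) b'(1) by simp
        moreover have "count (mset (combs 3 b')) ts \<ge> 1" "count (mset (combs 3 b)) ts \<ge> 1"
          using t' b by (auto simp: Suc_le_eq)
        ultimately show False using M3[OF bl] c3[of ts] by simp
      qed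
    qed
  qed
  have mult: "length (filter (\<lambda>B. K \<in> B) (map sys L)) = m" if K: "K \<subseteq> {0..<10}" "card K = 4" for K
  proof -
    have fK: "finite K" using K finite_subset by blast
    define ks where "ks = sorted_list_of_set K"
    have ks: "sorted_wrt (<) ks" "set ks = K" "length ks = 4"
      using fK K by (auto simp: ks_def)
    have ksQ: "ks \<in> set (combs 4 Q)" using combs_char[OF Q_sorted] ks K Q_set by auto
    have eq: "K \<in> sys bl \<longleftrightarrow> ks \<in> set bl" if bl: "bl \<in> set L" for bl
    proof
      assume "K \<in> sys bl"
      then obtain b where b: "b \<in> set bl" "K = set b" by (auto simp: sys_def)
      have sbb: "sorted_wrt (<) b" using blk2[OF bl b(1)] by blast
      have "set b = set ks" using b ks by simp
      then have "b = ks" using strict_sorted_equal[OF ks(1) sbb] by blast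
      then show "ks \<in> set bl" using b by simp
    qed (use ks in \<open>auto simp: sys_def\<close>)
    have "length (filter (\<lambda>B. K \<in> B) (map sys L)) = length (filter (\<lambda>bl. ks \<in> set bl) L)"
    proof -
      have "filter (\<lambda>bl. K \<in> sys bl) L = filter (\<lambda>bl. ks \<in> set bl) L"
        using eq by (intro filter_cong) auto
      then show ?thesis by (simp add: filter_map comp_def)
    qed
    also have "\<dots> = count (mset (concat L)) ks"
    proof -
      have "\<forall>bl\<in>set L. distinct bl" using dist by blast
      from count_concat_distinct[OF this, of ks] show ?thesis by simp
    qed
    also have "\<dots> = m * count (mset (combs 4 Q)) ks"
      unfolding M4 by (rule count_concat_replicate)
    also have "count (mset (combs 4 Q)) ks = 1"
      using combs_distinct[OF Q_sorted, of 4] ksQ by (simp add: distinct_count_atmost_1)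
    finally show ?thesis by simp
  qed
  show ?thesis using steiner mult by blast
qed

definition D2_0 :: "nat list list" where
  "D2_0 = [[0,1,2,3],[0,1,4,9],[0,1,5,6],[0,1,7,8],[0,2,4,8],[0,2,5,7],[0,2,6,9],[0,3,4,5],[0,3,6,8],[0,3,7,9],[0,4,6,7],[0,5,8,9],[1,2,4,6],[1,2,5,8],[1,2,7,9],[1,3,4,8],[1,3,5,9],[1,3,6,7],[1,4,5,7],[1,6,8,9],[2,3,4,7],[2,3,5,6],[2,3,8,9],[2,4,5,9],[2,6,7,8],[3,4,6,9],[3,5,7,8],[4,5,6,8],[4,7,8,9],[5,6,7,9]]"

lemma D2_0_ok: "msort (concat (map (combs 3) D2_0)) = combs 3 Q"
  by code_simp

definition D2_1 :: "nat list list" where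
  "D2_1 = [[0,1,2,3],[0,1,4,7],[0,1,5,6],[0,1,8,9],[0,2,4,6],[0,2,5,9],[0,2,7,8],[0,3,4,9],[0,3,5,7],[0,3,6,8],[0,4,5,8],[0,6,7,9],[1,2,4,8],[1,2,5,7],[1,2,6,9],[1,3,4,6],[1,3,5,8],[1,3,7,9],[1,4,5,9],[1,6,7,8],[2,3,4,5],[2,3,6,7],[2,3,8,9],[2,4,7,9],[2,5,6,8],[3,4,7,8],[3,5,6,9],[4,5,6,7],[4,6,8,9],[5,7,8,9]]"

lemma D2_1_ok: "msort (concat (map (combs 3) D2_1)) = combs 3 Q"
  by code_simp

definition D2_2 :: "nat list list" where
  "D2_2 = [[0,1,2,9],[0,1,3,6],[0,1,4,8],[0,1,5,7],[0,2,3,8],[0,2,4,5],[0,2,6,7],[0,3,4,7],[0,3,5,9],[0,4,6,9],[0,5,6,8],[0,7,8,9],[1,2,3,5],[1,2,4,7],[1,2,6,8],[1,3,4,9],[1,3,7,8],[1,4,5,6],[1,5,8,9],[1,6,7,9],[2,3,4,6],[2,3,7,9],[2,4,8,9],[2,5,6,9],[2,5,7,8],[3,4,5,8],[3,5,6,7],[3,6,8,9],[4,5,7,9],[4,6,7,8]]"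

lemma D2_2_ok: "msort (concat (map (combs 3) D2_2)) = combs 3 Q"
  by code_simp

definition D2_3 :: "nat list list" where
  "D2_3 = [[0,1,2,9],[0,1,3,6],[0,1,4,8],[0,1,5,7],[0,2,3,8],[0,2,4,5],[0,2,6,7],[0,3,4,7],[0,3,5,9],[0,4,6,9],[0,5,6,8],[0,7,8,9],[1,2,3,5],[1,2,4,7],[1,2,6,8],[1,3,4,9],[1,3,7,8],[1,4,5,6],[1,5,8,9],[1,6,7,9],[2,3,4,6],[2,3,7,9],[2,4,8,9],[2,5,6,9],[2,5,7,8],[3,4,5,8],[3,5,6,7],[3,6,8,9],[4,5,7,9],[4,6,7,8]]"

lemma D2_3_ok: "msort (concat (map (combs 3) D2_3)) = combs 3 Q"
  by code_simp

definition D2_4 :: "nat list list" where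
  "D2_4 = [[0,1,2,7],[0,1,3,9],[0,1,4,6],[0,1,5,8],[0,2,3,6],[0,2,4,8],[0,2,5,9],[0,3,4,5],[0,3,7,8],[0,4,7,9],[0,5,6,7],[0,6,8,9],[1,2,3,8],[1,2,4,5],[1,2,6,9],[1,3,4,7],[1,3,5,6],[1,4,8,9],[1,5,7,9],[1,6,7,8],[2,3,4,9],[2,3,5,7],[2,4,6,7],[2,5,6,8],[2,7,8,9],[3,4,6,8],[3,5,8,9],[3,6,7,9],[4,5,6,9],[4,5,7,8]]"

lemma D2_4_ok: "msort (concat (map (combs 3) D2_4)) = combs 3 Q"
  by code_simp

definition D2_5 :: "nat list list" where
  "D2_5 = [[0,1,2,6],[0,1,3,8],[0,1,4,5],[0,1,7,9],[0,2,3,5],[0,2,4,7],[0,2,8,9],[0,3,4,9],[0,3,6,7],[0,4,6,8],[0,5,6,9],[0,5,7,8],[1,2,3,7],[1,2,4,9],[1,2,5,8],[1,3,4,6],[1,3,5,9],[1,4,7,8],[1,5,6,7],[1,6,8,9],[2,3,4,8],[2,3,6,9],[2,4,5,6],[2,5,7,9],[2,6,7,8],[3,4,5,7],[3,5,6,8],[3,7,8,9],[4,5,8,9],[4,6,7,9]]"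

lemma D2_5_ok: "msort (concat (map (combs 3) D2_5)) = combs 3 Q"
  by code_simp

definition D2_6 :: "nat list list" where
  "D2_6 = [[0,1,2,5],[0,1,3,9],[0,1,4,6],[0,1,7,8],[0,2,3,7],[0,2,4,9],[0,2,6,8],[0,3,4,8],[0,3,5,6],[0,4,5,7],[0,5,8,9],[0,6,7,9],[1,2,3,4],[1,2,6,7],[1,2,8,9],[1,3,5,7],[1,3,6,8],[1,4,5,8],[1,4,7,9],[1,5,6,9],[2,3,5,8],[2,3,6,9],[2,4,5,6],[2,4,7,8],[2,5,7,9],[3,4,5,9],[3,4,6,7],[3,7,8,9],[4,6,8,9],[5,6,7,8]]"

lemma D2_6_ok: "msort (concat (map (combs 3) D2_6)) = combs 3 Q"
  by code_simp

definition D2_7 :: "nat list list" where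
  "D2_7 = [[0,1,2,7],[0,1,3,5],[0,1,4,9],[0,1,6,8],[0,2,3,4],[0,2,5,8],[0,2,6,9],[0,3,6,7],[0,3,8,9],[0,4,5,6],[0,4,7,8],[0,5,7,9],[1,2,3,6],[1,2,4,5],[1,2,8,9],[1,3,4,8],[1,3,7,9],[1,4,6,7],[1,5,6,9],[1,5,7,8],[2,3,5,9],[2,3,7,8],[2,4,6,8],[2,4,7,9],[2,5,6,7],[3,4,5,7],[3,4,6,9],[3,5,6,8],[4,5,8,9],[6,7,8,9]]"

lemma D2_7_ok: "msort (concat (map (combs 3) D2_7)) = combs 3 Q"
  by code_simp

definition D2_8 :: "nat list list" where
  "D2_8 = [[0,1,2,5],[0,1,3,4],[0,1,6,7],[0,1,8,9],[0,2,3,6],[0,2,4,9],[0,2,7,8],[0,3,5,8],[0,3,7,9],[0,4,5,7],[0,4,6,8],[0,5,6,9],[1,2,3,8],[1,2,4,6],[1,2,7,9],[1,3,5,7],[1,3,6,9],[1,4,5,9],[1,4,7,8],[1,5,6,8],[2,3,4,7],[2,3,5,9],[2,4,5,8],[2,5,6,7],[2,6,8,9],[3,4,5,6],[3,4,8,9],[3,6,7,8],[4,6,7,9],[5,7,8,9]]"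

lemma D2_8_ok: "msort (concat (map (combs 3) D2_8)) = combs 3 Q"
  by code_simp

definition D2_9 :: "nat list list" where
  "D2_9 = [[0,1,2,4],[0,1,3,5],[0,1,6,8],[0,1,7,9],[0,2,3,7],[0,2,5,6],[0,2,8,9],[0,3,4,8],[0,3,6,9],[0,4,5,9],[0,4,6,7],[0,5,7,8],[1,2,3,6],[1,2,5,9],[1,2,7,8],[1,3,4,7],[1,3,8,9],[1,4,5,8],[1,4,6,9],[1,5,6,7],[2,3,4,9],[2,3,5,8],[2,4,5,7],[2,4,6,8],[2,6,7,9],[3,4,5,6],[3,5,7,9],[3,6,7,8],[4,7,8,9],[5,6,8,9]]"

lemma D2_9_ok: "msort (concat (map (combs 3) D2_9)) = combs 3 Q"
  by code_simp

definition D2_10 :: "nat list list" where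
  "D2_10 = [[0,1,2,8],[0,1,3,7],[0,1,4,5],[0,1,6,9],[0,2,3,9],[0,2,4,7],[0,2,5,6],[0,3,4,6],[0,3,5,8],[0,4,8,9],[0,5,7,9],[0,6,7,8],[1,2,3,4],[1,2,5,9],[1,2,6,7],[1,3,5,6],[1,3,8,9],[1,4,6,8],[1,4,7,9],[1,5,7,8],[2,3,5,7],[2,3,6,8],[2,4,5,8],[2,4,6,9],[2,7,8,9],[3,4,5,9],[3,4,7,8],[3,6,7,9],[4,5,6,7],[5,6,8,9]]"

lemma D2_10_ok: "msort (concat (map (combs 3) D2_10)) = combs 3 Q"
  by code_simp

definition D2_11 :: "nat list list" where
  "D2_11 = [[0,1,2,6],[0,1,3,8],[0,1,4,7],[0,1,5,9],[0,2,3,4],[0,2,5,8],[0,2,7,9],[0,3,5,7],[0,3,6,9],[0,4,5,6],[0,4,8,9],[0,6,7,8],[1,2,3,9],[1,2,4,8],[1,2,5,7],[1,3,4,5],[1,3,6,7],[1,4,6,9],[1,5,6,8],[1,7,8,9],[2,3,5,6],[2,3,7,8],[2,4,5,9],[2,4,6,7],[2,6,8,9],[3,4,6,8],[3,4,7,9],[3,5,8,9],[4,5,7,8],[5,6,7,9]]"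

lemma D2_11_ok: "msort (concat (map (combs 3) D2_11)) = combs 3 Q"
  by code_simp

definition D2_12 :: "nat list list" where
  "D2_12 = [[0,1,2,8],[0,1,3,4],[0,1,5,9],[0,1,6,7],[0,2,3,9],[0,2,4,6],[0,2,5,7],[0,3,5,6],[0,3,7,8],[0,4,5,8],[0,4,7,9],[0,6,8,9],[1,2,3,7],[1,2,4,9],[1,2,5,6],[1,3,5,8],[1,3,6,9],[1,4,5,7],[1,4,6,8],[1,7,8,9],[2,3,4,5],[2,3,6,8],[2,4,7,8],[2,5,8,9],[2,6,7,9],[3,4,6,7],[3,4,8,9],[3,5,7,9],[4,5,6,9],[5,6,7,8]]"

lemma D2_12_ok: "msort (concat (map (combs 3) D2_12)) = combs 3 Q"
  by code_simp

definition D2_13 :: "nat list list" where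
  "D2_13 = [[0,1,2,4],[0,1,3,7],[0,1,5,8],[0,1,6,9],[0,2,3,5],[0,2,6,8],[0,2,7,9],[0,3,4,6],[0,3,8,9],[0,4,5,9],[0,4,7,8],[0,5,6,7],[1,2,3,9],[1,2,5,6],[1,2,7,8],[1,3,4,5],[1,3,6,8],[1,4,6,7],[1,4,8,9],[1,5,7,9],[2,3,4,8],[2,3,6,7],[2,4,5,7],[2,4,6,9],[2,5,8,9],[3,4,7,9],[3,5,6,9],[3,5,7,8],[4,5,6,8],[6,7,8,9]]"

lemma D2_13_ok: "msort (concat (map (combs 3) D2_13)) = combs 3 Q"
  by code_simp

definition L2 :: "nat list list list" where
  "L2 = [D2_0, D2_1, D2_2, D2_3, D2_4, D2_5, D2_6, D2_7, D2_8, D2_9, D2_10, D2_11, D2_12, D2_13]"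

lemma L2_E3: "\<forall>bl\<in>set L2. msort (concat (map (combs 3) bl)) = combs 3 Q"
  by (simp add: L2_def D2_0_ok D2_1_ok D2_2_ok D2_3_ok D2_4_ok D2_5_ok D2_6_ok D2_7_ok D2_8_ok D2_9_ok D2_10_ok D2_11_ok D2_12_ok D2_13_ok)

lemma L2_E4: "msort (concat L2) = concat (map (replicate 2) (combs 4 Q))"
  by code_simp

definition D3_0 :: "nat list list" where
  "D3_0 = [[0,1,2,3],[0,1,4,5],[0,1,6,7],[0,1,8,9],[0,2,4,7],[0,2,5,8],[0,2,6,9],[0,3,4,9],[0,3,5,6],[0,3,7,8],[0,4,6,8],[0,5,7,9],[1,2,4,8],[1,2,5,6],[1,2,7,9],[1,3,4,7],[1,3,5,9],[1,3,6,8],[1,4,6,9],[1,5,7,8],[2,3,4,6],[2,3,5,7],[2,3,8,9],[2,4,5,9],[2,6,7,8],[3,4,5,8],[3,6,7,9],[4,5,6,7],[4,7,8,9],[5,6,8,9]]"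

lemma D3_0_ok: "msort (concat (map (combs 3) D3_0)) = combs 3 Q"
  by code_simp

definition D3_1 :: "nat list list" where
  "D3_1 = [[0,1,2,7],[0,1,3,9],[0,1,4,6],[0,1,5,8],[0,2,3,6],[0,2,4,8],[0,2,5,9],[0,3,4,5],[0,3,7,8],[0,4,7,9],[0,5,6,7],[0,6,8,9],[1,2,3,4],[1,2,5,6],[1,2,8,9],[1,3,5,7],[1,3,6,8],[1,4,5,9],[1,4,7,8],[1,6,7,9],[2,3,5,8],[2,3,7,9],[2,4,5,7],[2,4,6,9],[2,6,7,8],[3,4,6,7],[3,4,8,9],[3,5,6,9],[4,5,6,8],[5,7,8,9]]"

lemma D3_1_ok: "msort (concat (map (combs 3) D3_1)) = combs 3 Q"
  by code_simp

definition D3_2 :: "nat list list" where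
  "D3_2 = [[0,1,2,5],[0,1,3,4],[0,1,6,7],[0,1,8,9],[0,2,3,6],[0,2,4,8],[0,2,7,9],[0,3,5,9],[0,3,7,8],[0,4,5,7],[0,4,6,9],[0,5,6,8],[1,2,3,7],[1,2,4,9],[1,2,6,8],[1,3,5,8],[1,3,6,9],[1,4,5,6],[1,4,7,8],[1,5,7,9],[2,3,4,5],[2,3,8,9],[2,4,6,7],[2,5,6,9],[2,5,7,8],[3,4,6,8],[3,4,7,9],[3,5,6,7],[4,5,8,9],[6,7,8,9]]"

lemma D3_2_ok: "msort (concat (map (combs 3) D3_2)) = combs 3 Q"
  by code_simp

definition D3_3 :: "nat list list" where
  "D3_3 = [[0,1,2,7],[0,1,3,4],[0,1,5,9],[0,1,6,8],[0,2,3,8],[0,2,4,9],[0,2,5,6],[0,3,5,7],[0,3,6,9],[0,4,5,8],[0,4,6,7],[0,7,8,9],[1,2,3,6],[1,2,4,5],[1,2,8,9],[1,3,5,8],[1,3,7,9],[1,4,6,9],[1,4,7,8],[1,5,6,7],[2,3,4,7],[2,3,5,9],[2,4,6,8],[2,5,7,8],[2,6,7,9],[3,4,5,6],[3,4,8,9],[3,6,7,8],[4,5,7,9],[5,6,8,9]]"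

lemma D3_3_ok: "msort (concat (map (combs 3) D3_3)) = combs 3 Q"
  by code_simp

definition D3_4 :: "nat list list" where
  "D3_4 = [[0,1,2,8],[0,1,3,6],[0,1,4,9],[0,1,5,7],[0,2,3,4],[0,2,5,9],[0,2,6,7],[0,3,5,8],[0,3,7,9],[0,4,5,6],[0,4,7,8],[0,6,8,9],[1,2,3,7],[1,2,4,5],[1,2,6,9],[1,3,4,8],[1,3,5,9],[1,4,6,7],[1,5,6,8],[1,7,8,9],[2,3,5,6],[2,3,8,9],[2,4,6,8],[2,4,7,9],[2,5,7,8],[3,4,5,7],[3,4,6,9],[3,6,7,8],[4,5,8,9],[5,6,7,9]]"

lemma D3_4_ok: "msort (concat (map (combs 3) D3_4)) = combs 3 Q"
  by code_simp

definition D3_5 :: "nat list list" where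
  "D3_5 = [[0,1,2,4],[0,1,3,7],[0,1,5,6],[0,1,8,9],[0,2,3,9],[0,2,5,7],[0,2,6,8],[0,3,4,6],[0,3,5,8],[0,4,5,9],[0,4,7,8],[0,6,7,9],[1,2,3,8],[1,2,5,9],[1,2,6,7],[1,3,4,5],[1,3,6,9],[1,4,6,8],[1,4,7,9],[1,5,7,8],[2,3,4,7],[2,3,5,6],[2,4,5,8],[2,4,6,9],[2,7,8,9],[3,4,8,9],[3,5,7,9],[3,6,7,8],[4,5,6,7],[5,6,8,9]]"

lemma D3_5_ok: "msort (concat (map (combs 3) D3_5)) = combs 3 Q"
  by code_simp

definition D3_6 :: "nat list list" where
  "D3_6 = [[0,1,2,6],[0,1,3,8],[0,1,4,5],[0,1,7,9],[0,2,3,7],[0,2,4,9],[0,2,5,8],[0,3,4,6],[0,3,5,9],[0,4,7,8],[0,5,6,7],[0,6,8,9],[1,2,3,5],[1,2,4,7],[1,2,8,9],[1,3,4,9],[1,3,6,7],[1,4,6,8],[1,5,6,9],[1,5,7,8],[2,3,4,8],[2,3,6,9],[2,4,5,6],[2,5,7,9],[2,6,7,8],[3,4,5,7],[3,5,6,8],[3,7,8,9],[4,5,8,9],[4,6,7,9]]"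

lemma D3_6_ok: "msort (concat (map (combs 3) D3_6)) = combs 3 Q"
  by code_simp

definition D3_7 :: "nat list list" where
  "D3_7 = [[0,1,2,3],[0,1,4,6],[0,1,5,9],[0,1,7,8],[0,2,4,7],[0,2,5,6],[0,2,8,9],[0,3,4,9],[0,3,5,7],[0,3,6,8],[0,4,5,8],[0,6,7,9],[1,2,4,9],[1,2,5,8],[1,2,6,7],[1,3,4,8],[1,3,5,6],[1,3,7,9],[1,4,5,7],[1,6,8,9],[2,3,4,5],[2,3,6,9],[2,3,7,8],[2,4,6,8],[2,5,7,9],[3,4,6,7],[3,5,8,9],[4,5,6,9],[4,7,8,9],[5,6,7,8]]"

lemma D3_7_ok: "msort (concat (map (combs 3) D3_7)) = combs 3 Q"
  by code_simp

definition D3_8 :: "nat list list" where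
  "D3_8 = [[0,1,2,5],[0,1,3,6],[0,1,4,8],[0,1,7,9],[0,2,3,7],[0,2,4,6],[0,2,8,9],[0,3,4,9],[0,3,5,8],[0,4,5,7],[0,5,6,9],[0,6,7,8],[1,2,3,4],[1,2,6,9],[1,2,7,8],[1,3,5,7],[1,3,8,9],[1,4,5,9],[1,4,6,7],[1,5,6,8],[2,3,5,9],[2,3,6,8],[2,4,5,8],[2,4,7,9],[2,5,6,7],[3,4,5,6],[3,4,7,8],[3,6,7,9],[4,6,8,9],[5,7,8,9]]"

lemma D3_8_ok: "msort (concat (map (combs 3) D3_8)) = combs 3 Q"
  by code_simp

definition D3_9 :: "nat list list" where
  "D3_9 = [[0,1,2,4],[0,1,3,5],[0,1,6,9],[0,1,7,8],[0,2,3,9],[0,2,5,7],[0,2,6,8],[0,3,4,8],[0,3,6,7],[0,4,5,6],[0,4,7,9],[0,5,8,9],[1,2,3,6],[1,2,5,8],[1,2,7,9],[1,3,4,7],[1,3,8,9],[1,4,5,9],[1,4,6,8],[1,5,6,7],[2,3,4,5],[2,3,7,8],[2,4,6,7],[2,4,8,9],[2,5,6,9],[3,4,6,9],[3,5,6,8],[3,5,7,9],[4,5,7,8],[6,7,8,9]]"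

lemma D3_9_ok: "msort (concat (map (combs 3) D3_9)) = combs 3 Q"
  by code_simp

definition D3_10 :: "nat list list" where
  "D3_10 = [[0,1,2,9],[0,1,3,8],[0,1,4,7],[0,1,5,6],[0,2,3,4],[0,2,5,8],[0,2,6,7],[0,3,5,7],[0,3,6,9],[0,4,5,9],[0,4,6,8],[0,7,8,9],[1,2,3,5],[1,2,4,6],[1,2,7,8],[1,3,4,9],[1,3,6,7],[1,4,5,8],[1,5,7,9],[1,6,8,9],[2,3,6,8],[2,3,7,9],[2,4,5,7],[2,4,8,9],[2,5,6,9],[3,4,5,6],[3,4,7,8],[3,5,8,9],[4,6,7,9],[5,6,7,8]]"

lemma D3_10_ok: "msort (concat (map (combs 3) D3_10)) = combs 3 Q"
  by code_simp

definition D3_11 :: "nat list list" where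
  "D3_11 = [[0,1,2,6],[0,1,3,7],[0,1,4,9],[0,1,5,8],[0,2,3,5],[0,2,4,7],[0,2,8,9],[0,3,4,8],[0,3,6,9],[0,4,5,6],[0,5,7,9],[0,6,7,8],[1,2,3,9],[1,2,4,8],[1,2,5,7],[1,3,4,5],[1,3,6,8],[1,4,6,7],[1,5,6,9],[1,7,8,9],[2,3,4,6],[2,3,7,8],[2,4,5,9],[2,5,6,8],[2,6,7,9],[3,4,7,9],[3,5,6,7],[3,5,8,9],[4,5,7,8],[4,6,8,9]]"

lemma D3_11_ok: "msort (concat (map (combs 3) D3_11)) = combs 3 Q"
  by code_simp

definition D3_12 :: "nat list list" where
  "D3_12 = [[0,1,2,3],[0,1,4,9],[0,1,5,6],[0,1,7,8],[0,2,4,8],[0,2,5,7],[0,2,6,9],[0,3,4,5],[0,3,6,8],[0,3,7,9],[0,4,6,7],[0,5,8,9],[1,2,4,7],[1,2,5,9],[1,2,6,8],[1,3,4,6],[1,3,5,7],[1,3,8,9],[1,4,5,8],[1,6,7,9],[2,3,4,9],[2,3,5,8],[2,3,6,7],[2,4,5,6],[2,7,8,9],[3,4,7,8],[3,5,6,9],[4,5,7,9],[4,6,8,9],[5,6,7,8]]"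

lemma D3_12_ok: "msort (concat (map (combs 3) D3_12)) = combs 3 Q"
  by code_simp

definition D3_13 :: "nat list list" where
  "D3_13 = [[0,1,2,6],[0,1,3,9],[0,1,4,8],[0,1,5,7],[0,2,3,8],[0,2,4,5],[0,2,7,9],[0,3,4,7],[0,3,5,6],[0,4,6,9],[0,5,8,9],[0,6,7,8],[1,2,3,4],[1,2,5,9],[1,2,7,8],[1,3,5,8],[1,3,6,7],[1,4,5,6],[1,4,7,9],[1,6,8,9],[2,3,5,7],[2,3,6,9],[2,4,6,7],[2,4,8,9],[2,5,6,8],[3,4,5,9],[3,4,6,8],[3,7,8,9],[4,5,7,8],[5,6,7,9]]"

lemma D3_13_ok: "msort (concat (map (combs 3) D3_13)) = combs 3 Q"
  by code_simp

definition D3_14 :: "nat list list" where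
  "D3_14 = [[0,1,2,4],[0,1,3,5],[0,1,6,8],[0,1,7,9],[0,2,3,6],[0,2,5,9],[0,2,7,8],[0,3,4,7],[0,3,8,9],[0,4,5,8],[0,4,6,9],[0,5,6,7],[1,2,3,9],[1,2,5,8],[1,2,6,7],[1,3,4,6],[1,3,7,8],[1,4,5,7],[1,4,8,9],[1,5,6,9],[2,3,4,8],[2,3,5,7],[2,4,5,6],[2,4,7,9],[2,6,8,9],[3,4,5,9],[3,5,6,8],[3,6,7,9],[4,6,7,8],[5,7,8,9]]"

lemma D3_14_ok: "msort (concat (map (combs 3) D3_14)) = combs 3 Q"
  by code_simp

definition D3_15 :: "nat list list" where
  "D3_15 = [[0,1,2,8],[0,1,3,4],[0,1,5,9],[0,1,6,7],[0,2,3,7],[0,2,4,5],[0,2,6,9],[0,3,5,6],[0,3,8,9],[0,4,6,8],[0,4,7,9],[0,5,7,8],[1,2,3,5],[1,2,4,6],[1,2,7,9],[1,3,6,9],[1,3,7,8],[1,4,5,7],[1,4,8,9],[1,5,6,8],[2,3,4,9],[2,3,6,8],[2,4,7,8],[2,5,6,7],[2,5,8,9],[3,4,5,8],[3,4,6,7],[3,5,7,9],[4,5,6,9],[6,7,8,9]]"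

lemma D3_15_ok: "msort (concat (map (combs 3) D3_15)) = combs 3 Q"
  by code_simp

definition D3_16 :: "nat list list" where
  "D3_16 = [[0,1,2,7],[0,1,3,9],[0,1,4,6],[0,1,5,8],[0,2,3,5],[0,2,4,9],[0,2,6,8],[0,3,4,8],[0,3,6,7],[0,4,5,7],[0,5,6,9],[0,7,8,9],[1,2,3,8],[1,2,4,5],[1,2,6,9],[1,3,4,7],[1,3,5,6],[1,4,8,9],[1,5,7,9],[1,6,7,8],[2,3,4,6],[2,3,7,9],[2,4,7,8],[2,5,6,7],[2,5,8,9],[3,4,5,9],[3,5,7,8],[3,6,8,9],[4,5,6,8],[4,6,7,9]]"

lemma D3_16_ok: "msort (concat (map (combs 3) D3_16)) = combs 3 Q"
  by code_simp

definition D3_17 :: "nat list list" where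
  "D3_17 = [[0,1,2,5],[0,1,3,8],[0,1,4,7],[0,1,6,9],[0,2,3,9],[0,2,4,6],[0,2,7,8],[0,3,4,5],[0,3,6,7],[0,4,8,9],[0,5,6,8],[0,5,7,9],[1,2,3,7],[1,2,4,9],[1,2,6,8],[1,3,4,6],[1,3,5,9],[1,4,5,8],[1,5,6,7],[1,7,8,9],[2,3,4,8],[2,3,5,6],[2,4,5,7],[2,5,8,9],[2,6,7,9],[3,4,7,9],[3,5,7,8],[3,6,8,9],[4,5,6,9],[4,6,7,8]]"

lemma D3_17_ok: "msort (concat (map (combs 3) D3_17)) = combs 3 Q"
  by code_simp

definition D3_18 :: "nat list list" where
  "D3_18 = [[0,1,2,9],[0,1,3,5],[0,1,4,7],[0,1,6,8],[0,2,3,8],[0,2,4,5],[0,2,6,7],[0,3,4,6],[0,3,7,9],[0,4,8,9],[0,5,6,9],[0,5,7,8],[1,2,3,6],[1,2,4,8],[1,2,5,7],[1,3,4,9],[1,3,7,8],[1,4,5,6],[1,5,8,9],[1,6,7,9],[2,3,4,7],[2,3,5,9],[2,4,6,9],[2,5,6,8],[2,7,8,9],[3,4,5,8],[3,5,6,7],[3,6,8,9],[4,5,7,9],[4,6,7,8]]"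

lemma D3_18_ok: "msort (concat (map (combs 3) D3_18)) = combs 3 Q"
  by code_simp

definition D3_19 :: "nat list list" where
  "D3_19 = [[0,1,2,8],[0,1,3,7],[0,1,4,5],[0,1,6,9],[0,2,3,4],[0,2,5,6],[0,2,7,9],[0,3,5,9],[0,3,6,8],[0,4,6,7],[0,4,8,9],[0,5,7,8],[1,2,3,9],[1,2,4,6],[1,2,5,7],[1,3,4,8],[1,3,5,6],[1,4,7,9],[1,5,8,9],[1,6,7,8],[2,3,5,8],[2,3,6,7],[2,4,5,9],[2,4,7,8],[2,6,8,9],[3,4,5,7],[3,4,6,9],[3,7,8,9],[4,5,6,8],[5,6,7,9]]"

lemma D3_19_ok: "msort (concat (map (combs 3) D3_19)) = combs 3 Q"
  by code_simp

definition D3_20 :: "nat list list" where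
  "D3_20 = [[0,1,2,9],[0,1,3,6],[0,1,4,8],[0,1,5,7],[0,2,3,5],[0,2,4,6],[0,2,7,8],[0,3,4,7],[0,3,8,9],[0,4,5,9],[0,5,6,8],[0,6,7,9],[1,2,3,8],[1,2,4,7],[1,2,5,6],[1,3,4,5],[1,3,7,9],[1,4,6,9],[1,5,8,9],[1,6,7,8],[2,3,4,9],[2,3,6,7],[2,4,5,8],[2,5,7,9],[2,6,8,9],[3,4,6,8],[3,5,6,9],[3,5,7,8],[4,5,6,7],[4,7,8,9]]"

lemma D3_20_ok: "msort (concat (map (combs 3) D3_20)) = combs 3 Q"
  by code_simp

definition L3 :: "nat list list list" where
  "L3 = [D3_0, D3_1, D3_2, D3_3, D3_4, D3_5, D3_6, D3_7, D3_8, D3_9, D3_10, D3_11, D3_12, D3_13, D3_14, D3_15, D3_16, D3_17, D3_18, D3_19, D3_20]"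

lemma L3_E3: "\<forall>bl\<in>set L3. msort (concat (map (combs 3) bl)) = combs 3 Q"
  by (simp add: L3_def D3_0_ok D3_1_ok D3_2_ok D3_3_ok D3_4_ok D3_5_ok D3_6_ok D3_7_ok D3_8_ok D3_9_ok D3_10_ok D3_11_ok D3_12_ok D3_13_ok D3_14_ok D3_15_ok D3_16_ok D3_17_ok D3_18_ok D3_19_ok D3_20_ok)

lemma L3_E4: "msort (concat L3) = concat (map (replicate 3) (combs 4 Q))"
  by code_simp

lemma F2: "(\<forall>bl\<in>set L2. steiner_system 3 4 10 {0..<10} (sys bl)) \<and>
         (\<forall>K. K \<subseteq> {0..<10} \<and> card K = 4 \<longrightarrow> length (filter (\<lambda>B. K \<in> B) (map sys L2)) = 2)"
  using fam_ok[OF L2_E3 L2_E4] .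

lemma F3: "(\<forall>bl\<in>set L3. steiner_system 3 4 10 {0..<10} (sys bl)) \<and>
         (\<forall>K. K \<subseteq> {0..<10} \<and> card K = 4 \<longrightarrow> length (filter (\<lambda>B. K \<in> B) (map sys L3)) = 3)"
  using fam_ok[OF L3_E3 L3_E4] .

theorem theorem16:
  fixes \<mu> :: nat
  assumes "\<mu> \<ge> 2"
  shows "\<exists>F :: nat set set list. large_set_mult 3 4 10 \<mu> {0..<10} F"
proof -
  obtain a b :: nat where ab: "\<mu> = 2*a + 3*b"
  proof (cases "even \<mu>")
    case True
    then show ?thesis using that[of "\<mu> div 2" 0] by auto
  next
    case False
    then obtain k where k: "\<mu> = 2*k+1" using oddE by blast
    with assms have "k \<ge> 1" by simp
    then show ?thesis using that[of "k-1" 1] k by auto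
  qed
  define F where "F = concat (replicate a (map sys L2)) @ concat (replicate b (map sys L3))"
  have "large_set_mult 3 4 10 \<mu> {0..<10} F"
    unfolding large_set_mult_def
  proof (intro conjI allI impI ballI)
    show "finite {0..<10::nat}" by simp
    show "card {0..<10::nat} = 10" by simp
  next
    fix B assume "B \<in> set F"
    then have "B \<in> set (map sys L2) \<or> B \<in> set (map sys L3)"
      by (auto simp: F_def split: if_splits)
    then show "steiner_system 3 4 10 {0..<10} B" using F2 F3 by auto
  next
    fix K :: "nat set" assume K: "K \<subseteq> {0..<10} \<and> card K = 4"
    have "card {i. i < length F \<and> K \<in> F ! i} = length (filter (\<lambda>B. K \<in> B) F)"
      by (simp add: length_filter_conv_card)
    also have "\<dots> = a * 2 + b * 3" using F2 F3 K by (simp add: F_def length_filter_concat_replicate)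
    finally show "card {i. i < length F \<and> K \<in> F ! i} = \<mu>" using ab by simp
  qed
  then show ?thesis by blast
qed

end
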